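(* Let $K\in M_N(\mathbb C)$ satisfy $K^*=-K$, and let $\alpha=q/2$. If $b(t)$, $t$ in an interval, is a continuously differentiable curve of positive elements of $M_N(\mathbb C)$ solving $$\dot b=b^{\alpha}K-Kb^{\alpha},$$ and $s\ge 1$, then $\|b(t)\|_s$ is constant, and the eigenvalues of $b(t)$ and their multiplicities do not depend on $t$. In particular the operator norm $\|b(t)\|$ is constant.
   Context: $p=2n\ge2$ is a fixed even integer and $q=p/(p-1)$ is its conjugate exponent. $\tau(x)=\frac1N\operatorname{Re}\operatorname{Tr}(x)$, $|x|=(x^*x)^{1/2}$, and $\|x\|_s=\tau(|x|^s)^{1/s}$. $b^\alpha$ denotes the positive power of the positive matrix $b$ via functional calculus. *)

theory Defs
  imports "HOL-Analysis.Analysis" "HOL-Computational_Algebra.Polynomial"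
begin

text \<open>Matrices in M_N(C) are rendered as complex^'n^'n with N = CARD('n).\<close>

definition adjm :: "complex^'n^'n \<Rightarrow> complex^'n^'n" where
  "adjm A = (\<chi> i j. cnj (A $ j $ i))"

definition hermitian :: "complex^'n^'n \<Rightarrow> bool" where
  "hermitian A \<longleftrightarrow> adjm A = A"

definition unitary :: "complex^'n^'n \<Rightarrow> bool" where
  "unitary U \<longleftrightarrow> U ** adjm U = mat 1 \<and> adjm U ** U = mat 1"

text \<open>Positive (= positive semidefinite) matrix.\<close>
definition positive :: "complex^'n^'n \<Rightarrow> bool" where
  "positive A \<longleftrightarrow> hermitian A \<and>
     (\<forall>v::complex^'n. Re (\<Sum>i\<in>UNIV. cnj (v $ i) * (A *v v) $ i) \<ge> 0)"

definition diagm :: "('n \<Rightarrow> complex) \<Rightarrow> complex^'n^'n" where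
  "diagm d = (\<chi> i j. if i = j then d i else 0)"

text \<open>Functional calculus b^a for a positive matrix b and real a > 0,
  via a unitary diagonalisation b = U diag(d) U^*, d \<ge> 0.\<close>
definition mpow :: "complex^'n^'n \<Rightarrow> real \<Rightarrow> complex^'n^'n" where
  "mpow b a = (THE c. \<exists>U d. unitary U \<and> (\<forall>i. d i \<ge> 0) \<and>
      b = U ** diagm (\<lambda>i. complex_of_real (d i)) ** adjm U \<and>
      c = U ** diagm (\<lambda>i. complex_of_real (d i powr a)) ** adjm U)"

definition mabs :: "complex^'n^'n \<Rightarrow> complex^'n^'n" where
  "mabs x = mpow (adjm x ** x) (1/2)"

definition tau :: "complex^'n^'n \<Rightarrow> real" where
  "tau x = Re (trace x) / real CARD('n)"

definition snorm :: "real \<Rightarrow> complex^'n^'n \<Rightarrow> real" where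
  "snorm s x = tau (mpow (mabs x) s) powr (1/s)"

definition opnorm :: "complex^'n^'n \<Rightarrow> real" where
  "opnorm A = onorm (\<lambda>v::complex^'n. A *v v)"

definition is_eigenvalue :: "complex^'n^'n \<Rightarrow> complex \<Rightarrow> bool" where
  "is_eigenvalue A c \<longleftrightarrow> (\<exists>v. v \<noteq> 0 \<and> A *v v = (\<chi> i. c * v $ i))"

definition charpoly :: "complex^'n^'n \<Rightarrow> complex poly" where
  "charpoly A = det (\<chi> i j. (if i = j then [:0, 1:] else 0) - [:A $ i $ j:])"

text \<open>Algebraic multiplicity of c as an eigenvalue of A.\<close>
definition eig_mult :: "complex^'n^'n \<Rightarrow> complex \<Rightarrow> nat" where
  "eig_mult A c = order c (charpoly A)"

end

theory Submission
  imports Defs "HOL-Computational_Algebra.Fundamental_Theorem_Algebra"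
begin


lemma adjm_nth[simp]: "adjm A $ i $ j = cnj (A $ j $ i)"
  by (simp add: adjm_def)

lemma adjm_adjm[simp]: "adjm (adjm A) = A"
  by (simp add: vec_eq_iff)

lemma adjm_mult: "adjm (A ** B) = adjm B ** adjm A"
  by (simp add: vec_eq_iff matrix_matrix_mult_def mult.commute)

lemma adjm_mat1[simp]: "adjm (mat 1) = mat 1"
  by (simp add: vec_eq_iff mat_def)

lemma adjm_add: "adjm (A + B) = adjm A + adjm B"
  by (simp add: vec_eq_iff)

lemma adjm_diff: "adjm (A - B) = adjm A - adjm B"
  by (simp add: vec_eq_iff)

lemma diagm_nth[simp]: "diagm d $ i $ j = (if i = j then d i else 0)"
  by (simp add: diagm_def)

lemma adjm_diagm_real[simp]: "adjm (diagm (\<lambda>i. complex_of_real (d i))) = diagm (\<lambda>i. complex_of_real (d i))"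
  by (simp add: vec_eq_iff)

lemma mult_diagm_right: "(A ** diagm d) $ i $ j = A $ i $ j * d j"
  by (simp add: matrix_matrix_mult_def if_distrib if_distribR sum.delta' cong: if_cong)

lemma mult_diagm_left: "(diagm d ** A) $ i $ j = d i * A $ i $ j"
  by (simp add: matrix_matrix_mult_def if_distrib if_distribR sum.delta cong: if_cong)

lemma diagm_mult: "diagm d ** diagm e = diagm (\<lambda>i. d i * e i)"
  by (simp add: vec_eq_iff mult_diagm_left)

lemma unitary_adjm: "unitary U \<Longrightarrow> unitary (adjm U)"
  by (simp add: unitary_def)

lemma unitary_mult: "unitary U \<Longrightarrow> unitary V \<Longrightarrow> unitary (U ** V)"
  unfolding unitary_def adjm_mult
  by (metis matrix_mul_assoc matrix_mul_rid)

lemma unitaryD1: "unitary U \<Longrightarrow> U ** adjm U = mat 1" by (simp add: unitary_def)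
lemma unitaryD2: "unitary U \<Longrightarrow> adjm U ** U = mat 1" by (simp add: unitary_def)

lemma unitaryI: "adjm U ** U = mat 1 \<Longrightarrow> unitary U"
  unfolding unitary_def using matrix_left_right_inverse by blast




definition decomp :: "complex^'n^'n \<Rightarrow> complex^'n^'n \<Rightarrow> ('n \<Rightarrow> real) \<Rightarrow> bool" where
  "decomp b U d \<longleftrightarrow> unitary U \<and> (\<forall>i. d i \<ge> 0) \<and>
      b = U ** diagm (\<lambda>i. complex_of_real (d i)) ** adjm U"

lemma decomp_unique:
  assumes "decomp b U d" "decomp b V e"
  shows "U ** diagm (\<lambda>i. complex_of_real (d i powr a)) ** adjm U =
         V ** diagm (\<lambda>i. complex_of_real (e i powr a)) ** adjm V"
proof -
  let ?D = "diagm (\<lambda>i. complex_of_real (d i))"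
  let ?E = "diagm (\<lambda>i. complex_of_real (e i))"
  let ?Da = "diagm (\<lambda>i. complex_of_real (d i powr a))"
  let ?Ea = "diagm (\<lambda>i. complex_of_real (e i powr a))"
  have U: "unitary U" and V: "unitary V" and bU: "b = U ** ?D ** adjm U" and bV: "b = V ** ?E ** adjm V"
    using assms by (auto simp: decomp_def)
  define W where "W = adjm V ** U"
  have "W ** ?D = adjm V ** b ** U"
    using bU unitaryD2[OF U] unfolding W_def
    by (metis matrix_mul_assoc matrix_mul_rid)
  also have "\<dots> = ?E ** W"
    using bV unitaryD2[OF V] unfolding W_def
    by (metis matrix_mul_assoc matrix_mul_lid)
  finally have WDE: "W ** ?D = ?E ** W" .
  have "W $ i $ j * complex_of_real (d j powr a) = complex_of_real (e i powr a) * W $ i $ j" for i j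
  proof -
    have "W $ i $ j * complex_of_real (d j) = complex_of_real (e i) * W $ i $ j"
      using arg_cong[OF WDE, of "\<lambda>M. M $ i $ j"] by (simp add: mult_diagm_right mult_diagm_left)
    then have "W $ i $ j = 0 \<or> d j = e i"
      by (metis mult.commute mult_cancel_left of_real_eq_iff)
    then show ?thesis by auto
  qed
  then have WDEa: "W ** ?Da = ?Ea ** W"
    by (simp add: vec_eq_iff mult_diagm_right mult_diagm_left)
  have "U ** ?Da ** adjm U = V ** (W ** ?Da) ** adjm U"
    unfolding W_def using unitaryD1[OF V]
    by (metis matrix_mul_assoc matrix_mul_lid)
  also have "\<dots> = V ** ?Ea ** (W ** adjm U)"
    by (simp add: WDEa matrix_mul_assoc)
  also have "W ** adjm U = adjm V"
    unfolding W_def using unitaryD1[OF U] by (metis matrix_mul_assoc matrix_mul_rid)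
  finally show ?thesis .
qed

lemma mpow_eq:
  assumes "decomp b U d"
  shows "mpow b a = U ** diagm (\<lambda>i. complex_of_real (d i powr a)) ** adjm U"
  unfolding mpow_def
proof (rule the_equality)
  show "\<exists>V e. unitary V \<and> (\<forall>i. 0 \<le> e i) \<and> b = V ** diagm (\<lambda>i. complex_of_real (e i)) ** adjm V \<and>
      U ** diagm (\<lambda>i. complex_of_real (d i powr a)) ** adjm U = V ** diagm (\<lambda>i. complex_of_real (e i powr a)) ** adjm V"
    using assms by (auto simp: decomp_def)
next
  fix c assume "\<exists>V e. unitary V \<and> (\<forall>i. 0 \<le> e i) \<and> b = V ** diagm (\<lambda>i. complex_of_real (e i)) ** adjm V \<and>
      c = V ** diagm (\<lambda>i. complex_of_real (e i powr a)) ** adjm V"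
  then obtain V e where "decomp b V e" "c = V ** diagm (\<lambda>i. complex_of_real (e i powr a)) ** adjm V"
    by (auto simp: decomp_def)
  then show "c = U ** diagm (\<lambda>i. complex_of_real (d i powr a)) ** adjm U"
    using decomp_unique[OF assms] by metis
qed

lemma decomp_conj:
  assumes "decomp b U d" "unitary W"
  shows "decomp (W ** b ** adjm W) (W ** U) d"
  using assms unfolding decomp_def
  by (auto simp: unitary_mult adjm_mult matrix_mul_assoc)

lemma mpow_conj:
  assumes "decomp b U d" "unitary W"
  shows "mpow (W ** b ** adjm W) a = W ** mpow b a ** adjm W"
  using mpow_eq[OF decomp_conj[OF assms]] mpow_eq[OF assms(1)]
  by (simp add: adjm_mult matrix_mul_assoc)

lemma decomp_mpow:
  assumes "decomp b U d"
  shows "decomp (mpow b a) U (\<lambda>i. d i powr a)"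
  using assms mpow_eq[OF assms] by (auto simp: decomp_def)

lemma mpow_commute:
  assumes "decomp b U d"
  shows "mpow b a ** b = b ** mpow b a"
proof -
  have "mpow b a ** b = U ** (diagm (\<lambda>i. complex_of_real (d i powr a)) ** diagm (\<lambda>i. complex_of_real (d i))) ** adjm U"
    using assms mpow_eq[OF assms] unitaryD2[of U] unfolding decomp_def
    by (simp add: matrix_mul_assoc) (metis matrix_mul_assoc matrix_mul_rid)
  also have "\<dots> = U ** (diagm (\<lambda>i. complex_of_real (d i)) ** diagm (\<lambda>i. complex_of_real (d i powr a))) ** adjm U"
    by (simp add: diagm_mult mult.commute)
  also have "\<dots> = b ** mpow b a"
    using assms mpow_eq[OF assms] unitaryD2[of U] unfolding decomp_def
    by (simp add: matrix_mul_assoc) (metis matrix_mul_assoc matrix_mul_rid)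
  finally show ?thesis .
qed




definition cinner :: "complex^'n \<Rightarrow> complex^'n \<Rightarrow> complex" where
  "cinner v w = (\<Sum>i\<in>UNIV. cnj (v $ i) * w $ i)"

lemma cinner_adjm: "cinner v (A *v w) = cinner (adjm A *v v) w"
proof -
  have "cinner v (A *v w) = (\<Sum>i\<in>UNIV. \<Sum>j\<in>UNIV. cnj (v $ i) * A $ i $ j * w $ j)"
    by (simp add: cinner_def matrix_vector_mult_def sum_distrib_left mult.assoc)
  also have "\<dots> = (\<Sum>j\<in>UNIV. \<Sum>i\<in>UNIV. cnj (v $ i) * A $ i $ j * w $ j)"
    by (rule sum.swap)
  also have "\<dots> = cinner (adjm A *v v) w"
    by (simp add: cinner_def matrix_vector_mult_def sum_distrib_right sum_distrib_left mult_ac)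
  finally show ?thesis .
qed

lemma cinner_self: "cinner v v = complex_of_real (\<Sum>i\<in>UNIV. (cmod (v $ i))\<^sup>2)"
proof -
  have "cnj (v$i) * v$i = complex_of_real ((cmod (v$i))\<^sup>2)" for i
    using complex_norm_square[of "v$i"] by (simp add: mult.commute)
  then show ?thesis unfolding cinner_def of_real_sum by simp
qed

lemma cinner_self_eq_0: "cinner v v = 0 \<longleftrightarrow> v = 0"
proof -
  have "(\<Sum>i\<in>UNIV. (cmod (v $ i))\<^sup>2) = 0 \<longleftrightarrow> (\<forall>i. v $ i = 0)"
    by (subst sum_nonneg_eq_0_iff) auto
  then show ?thesis unfolding cinner_self of_real_eq_0_iff by (simp add: vec_eq_iff)
qed

lemma cinner_scale_right[simp]: "cinner v (c *s w) = c * cinner v w"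
  by (simp add: cinner_def sum_distrib_left mult_ac)
lemma cinner_scale_left[simp]: "cinner (c *s v) w = cnj c * cinner v w"
  by (simp add: cinner_def sum_distrib_left mult_ac)
lemma cinner_add_right[simp]: "cinner v (w + z) = cinner v w + cinner v z"
  by (simp add: cinner_def sum.distrib distrib_left)
lemma cinner_diff_right[simp]: "cinner v (w - z) = cinner v w - cinner v z"
  by (simp add: cinner_def sum_subtractf right_diff_distrib)
lemma cinner_sum_right: "cinner v (sum g S) = (\<Sum>s\<in>S. cinner v (g s))"
  by (induction S rule: infinite_finite_induct) (auto simp: cinner_def sum.distrib distrib_left)
lemma cinner_zero_right[simp]: "cinner v 0 = 0"
  by (simp add: cinner_def)
lemma cinner_commute: "cinner w v = cnj (cinner v w)"
  by (simp add: cinner_def mult.commute)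

lemma matrix_vector_sum: "A *v sum g S = (\<Sum>s\<in>S. A *v g s)"
  by (induction S rule: infinite_finite_induct) (auto simp: matrix_vector_right_distrib)

lemma scaleR_vs: "(r::real) *\<^sub>R (v::complex^'n) = complex_of_real r *s v"
  unfolding vec_eq_iff vector_scaleR_component by (simp add: scaleR_conv_of_real)

lemma scale_vs_split: "(c::complex) *s (v::complex^'n) = Re c *\<^sub>R v + Im c *\<^sub>R (\<i> *s v)"
proof -
  have "c * z = Re c *\<^sub>R z + Im c *\<^sub>R (\<i> * z)" for z
    by (subst (1) complex_eq[of c]) (simp add: scaleR_conv_of_real algebra_simps)
  then show ?thesis by (simp add: vec_eq_iff)
qed

definition oes :: "complex^'n^'n \<Rightarrow> (complex^'n) set \<Rightarrow> bool" where
  "oes A B \<longleftrightarrow> finite B \<and> (\<forall>v\<in>B. cinner v v = 1 \<and> (\<exists>l::real. A *v v = complex_of_real l *s v))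
     \<and> (\<forall>v\<in>B. \<forall>w\<in>B. v \<noteq> w \<longrightarrow> cinner v w = 0)"

lemma complement_nonzero:
  assumes "oes A B" "card B < CARD('n)"
  shows "\<exists>x::complex^'n. x \<noteq> 0 \<and> (\<forall>v\<in>B. cinner v x = 0)"
proof -
  have fin: "finite B" using assms by (simp add: oes_def)
  define T where "T = B \<union> (\<lambda>v. \<i> *s v) ` B"
  have "card T \<le> card B + card B"
    unfolding T_def using fin card_Un_le[of B "(\<lambda>v. \<i> *s v) ` B"] card_image_le[of B "\<lambda>v. \<i> *s v"]
    by linarith
  also have "\<dots> < DIM(complex^'n)" using assms(2) by simp
  finally have cT: "card T < DIM(complex^'n)" .
  have fT: "finite T" using fin by (simp add: T_def)
  have "span T \<noteq> UNIV"
  proof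
    assume "span T = UNIV"
    then have "dim (UNIV::(complex^'n) set) \<le> card T"
      using dim_le_card[of UNIV T] fT by simp
    then show False using cT by simp
  qed
  then obtain y where y: "y \<notin> span T" by auto
  define x where "x = y - (\<Sum>v\<in>B. cinner v y *s v)"
  have inspan: "(\<Sum>v\<in>B. cinner v y *s v) \<in> span T"
  proof (rule span_sum)
    fix v assume "v \<in> B"
    then have "v \<in> T" "\<i> *s v \<in> T" by (auto simp: T_def)
    then show "cinner v y *s v \<in> span T"
      by (subst scale_vs_split) (intro span_add span_scale span_base)
  qed
  have "x \<noteq> 0" using y inspan by (auto simp: x_def)
  moreover have "cinner w x = 0" if "w \<in> B" for w
  proof -
    have "(\<Sum>v\<in>B. cinner w (cinner v y *s v)) = (\<Sum>v\<in>B. if v = w then cinner w y else 0)"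
      using assms(1) that by (intro sum.cong) (auto simp: oes_def)
    also have "\<dots> = cinner w y" using fin that by simp
    finally show ?thesis by (simp add: x_def cinner_sum_right)
  qed
  ultimately show ?thesis by blast
qed




definition papp :: "complex^'n^'n \<Rightarrow> complex poly \<Rightarrow> complex^'n \<Rightarrow> complex^'n" where
  "papp A p x = (\<Sum>i\<le>degree p. coeff p i *s (((*v) A) ^^ i) x)"

lemma papp_bound:
  assumes "degree p \<le> M"
  shows "papp A p x = (\<Sum>i\<le>M. coeff p i *s (((*v) A) ^^ i) x)"
  unfolding papp_def
  by (rule sum.mono_neutral_left) (use assms in \<open>auto simp: coeff_eq_0\<close>)

lemma papp_add: "papp A (p + q) x = papp A p x + papp A q x"
proof -
  let ?M = "max (degree p) (degree q)"
  have "degree (p + q) \<le> ?M" by (rule degree_add_le) auto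
  then show ?thesis
    by (simp add: papp_bound[of _ ?M] sum.distrib vector_sadd_rdistrib)
qed

lemma papp_smult: "papp A (smult c p) x = c *s papp A p x"
  by (simp add: papp_bound[OF degree_smult_le] papp_def sum_distrib_left vec_eq_iff
      sum_component mult.assoc)

lemma papp_pCons0: "papp A (pCons 0 p) x = A *v papp A p x"
proof -
  have "papp A (pCons 0 p) x = (\<Sum>i\<le>Suc (degree p). coeff (pCons 0 p) i *s (((*v) A) ^^ i) x)"
    by (rule papp_bound) (simp add: degree_pCons_le)
  also have "\<dots> = (\<Sum>i\<le>degree p. coeff p i *s (((*v) A) ^^ Suc i) x)"
    by (subst sum.atMost_Suc_shift) simp
  also have "\<dots> = A *v papp A p x"
    by (simp add: papp_def matrix_vector_sum vector_scalar_commute)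
  finally show ?thesis .
qed

lemma papp_monom: "papp A (monom c j) x = c *s (((*v) A) ^^ j) x"
proof -
  have "papp A (monom c j) x = (\<Sum>i\<le>j. coeff (monom c j) i *s (((*v) A) ^^ i) x)"
    by (rule papp_bound) (simp add: degree_monom_le)
  also have "\<dots> = (\<Sum>i\<le>j. if j = i then c *s (((*v) A) ^^ i) x else 0)"
    by (rule sum.cong) (auto simp: coeff_monom)
  also have "\<dots> = c *s (((*v) A) ^^ j) x" by simp
  finally show ?thesis .
qed

lemma papp_zero[simp]: "papp A 0 x = 0"
  by (simp add: papp_def)

lemma papp_sum: "papp A (sum g S) x = (\<Sum>s\<in>S. papp A (g s) x)"
  by (induction S rule: infinite_finite_induct) (auto simp: papp_add)

lemma papp_diff: "papp A (p - q) x = papp A p x - papp A q x"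
proof -
  have "papp A p x = papp A (p - q) x + papp A q x"
    using papp_add[of A "p - q" q x] by simp
  then show ?thesis by simp
qed

lemma papp_const: "papp A [:c:] x = c *s x"
  by (simp add: papp_def)

lemma papp_linear_factor: "papp A ([:-r, 1:] * q) x = A *v papp A q x - r *s papp A q x"
proof -
  have "[:-r, 1:] * q = pCons 0 q - smult r q"
    by (simp add: mult_pCons_left)
  then show ?thesis by (simp add: papp_diff papp_pCons0 papp_smult)
qed

lemma papp_in:
  fixes A :: "complex^'n^'n"
  assumes S0: "0 \<in> S" and Sadd: "\<And>x y. x \<in> S \<Longrightarrow> y \<in> S \<Longrightarrow> x + y \<in> S"
    and Ssc: "\<And>c x. x \<in> S \<Longrightarrow> c *s x \<in> S" and SA: "\<And>x. x \<in> S \<Longrightarrow> A *v x \<in> S"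
    and x: "x \<in> S"
  shows "papp A p x \<in> S"
proof -
  have it: "(((*v) A) ^^ i) x \<in> S" for i
    by (induction i) (auto simp: x SA)
  have "(\<Sum>i\<in>F. coeff p i *s (((*v) A) ^^ i) x) \<in> S" if "finite F" for F
    using that by (induction F rule: finite_induct) (auto simp: S0 Sadd Ssc it)
  then show ?thesis unfolding papp_def by simp
qed

lemma annihilating_poly:
  fixes A :: "complex^'n^'n" and x :: "complex^'n"
  shows "\<exists>p. p \<noteq> 0 \<and> papp A p x = 0"
proof -
  define g where "g i = (((*v) A) ^^ i) x" for i
  define M where "M = 2 * CARD('n)"
  show ?thesis
  proof (cases "inj_on g {..M}")
    case False
    then obtain i j where ij: "i \<noteq> j" "g i = g j"
      unfolding inj_on_def by blast
    define p where "p = monom (1::complex) j - monom 1 i"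
    have "coeff p j = 1" using ij by (simp add: p_def coeff_monom)
    then have "p \<noteq> 0" by auto
    moreover have "papp A p x = 0"
      using ij by (simp add: p_def papp_diff papp_monom g_def)
    ultimately show ?thesis by blast
  next
    case True
    let ?G = "g ` {..M}"
    have "card ?G = Suc M" using True by (simp add: card_image)
    then have "card ?G > DIM(complex^'n)" by (simp add: M_def)
    then have "dependent ?G" using independent_bound[of ?G] by linarith
    then obtain T u where T: "finite T" "T \<subseteq> ?G" "(\<Sum>v\<in>T. u v *\<^sub>R v) = 0" "\<exists>v\<in>T. u v \<noteq> 0"
      unfolding dependent_explicit by blast
    define J where "J = {i\<in>{..M}. g i \<in> T}"
    have TJ: "T = g ` J" using T(2) by (auto simp: J_def)
    have injJ: "inj_on g J" using True by (rule inj_on_subset) (auto simp: J_def)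
    have fJ: "finite J" by (simp add: J_def)
    define p where "p = (\<Sum>j\<in>J. monom (complex_of_real (u (g j))) j)"
    have "papp A p x = (\<Sum>j\<in>J. complex_of_real (u (g j)) *s g j)"
      by (simp add: p_def papp_sum papp_monom g_def)
    also have "\<dots> = (\<Sum>j\<in>J. u (g j) *\<^sub>R g j)"
      by (simp add: scaleR_vs)
    also have "\<dots> = (\<Sum>v\<in>T. u v *\<^sub>R v)"
      unfolding TJ by (rule sum.reindex[OF injJ, symmetric, unfolded comp_def])
    also have "\<dots> = 0" by (rule T(3))
    finally have pa: "papp A p x = 0" .
    obtain v where v: "v \<in> T" "u v \<noteq> 0" using T(4) by blast
    then obtain j0 where j0: "j0 \<in> J" "v = g j0" using TJ by blast
    have "coeff p j0 = (\<Sum>j\<in>J. if j = j0 then complex_of_real (u (g j)) else 0)"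
      by (simp add: p_def coeff_sum coeff_monom)
    also have "\<dots> = complex_of_real (u v)" using fJ j0 by simp
    finally have "p \<noteq> 0" using v by auto
    with pa show ?thesis by blast
  qed
qed

lemma eigvec_in_subspace:
  fixes A :: "complex^'n^'n"
  assumes S0: "0 \<in> S" and Sadd: "\<And>x y. x \<in> S \<Longrightarrow> y \<in> S \<Longrightarrow> x + y \<in> S"
    and Ssc: "\<And>c x. x \<in> S \<Longrightarrow> c *s x \<in> S" and SA: "\<And>x. x \<in> S \<Longrightarrow> A *v x \<in> S"
    and x: "x \<in> S" "x \<noteq> 0"
  shows "\<exists>y\<in>S. y \<noteq> 0 \<and> (\<exists>\<mu>. A *v y = \<mu> *s y)"
proof -
  obtain p where p: "p \<noteq> 0" "papp A p x = 0" using annihilating_poly by blast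
  have "\<forall>p. degree p = d \<longrightarrow> p \<noteq> 0 \<longrightarrow> papp A p x = 0 \<longrightarrow> (\<exists>y\<in>S. y \<noteq> 0 \<and> (\<exists>\<mu>. A *v y = \<mu> *s y))" for d
  proof (induction d rule: less_induct)
    case (less d)
    show ?case
    proof (intro allI impI)
      fix p :: "complex poly" assume dp: "degree p = d" and p0: "p \<noteq> 0" and pa: "papp A p x = 0"
      show "\<exists>y\<in>S. y \<noteq> 0 \<and> (\<exists>\<mu>. A *v y = \<mu> *s y)"
      proof (cases "d = 0")
        case True
        then have "degree p = 0" using dp by simp
        then obtain c where pc: "p = [:c:]" by (rule degree_eq_zeroE)
        then have c0: "c \<noteq> 0" using p0 by simp
        have "c *s x = 0" using pa pc by (simp add: papp_const)
        then have "x = 0" using c0 by (simp add: vec_eq_iff)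
        with x show ?thesis by simp
      next
        case False
        then have "\<not> constant (poly p)" using dp by (simp add: constant_degree)
        then obtain r where "poly p r = 0" using fundamental_theorem_of_algebra by blast
        then have "[:-r, 1:] dvd p" by (simp add: poly_eq_0_iff_dvd)
        then obtain q where pq: "p = [:-r, 1:] * q" by (rule dvdE)
        have q0: "q \<noteq> 0" using p0 pq by auto
        have dq: "degree q < d" using dp pq q0 degree_mult_eq[of "[:-r,1:]" q] by (simp del: mult_pCons_left)
        define y where "y = papp A q x"
        have yS: "y \<in> S" unfolding y_def by (rule papp_in[OF S0 Sadd Ssc SA x(1)])
        show ?thesis
        proof (cases "y = 0")
          case True
          then show ?thesis using less.IH[OF dq, rule_format, OF refl q0] y_def by simp
        next
          case False
          have "A *v y - r *s y = 0" using pa pq papp_linear_factor[of A r q x] by (simp add: y_def del: mult_pCons_left)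
          then have "A *v y = r *s y" by simp
          then show ?thesis using yS False by blast
        qed
      qed
    qed
  qed
  then show ?thesis using p by blast
qed




lemma oes_extend:
  fixes A :: "complex^'n^'n"
  assumes herm: "adjm A = A" and oes: "oes A B" and card: "card B < CARD('n)"
  shows "\<exists>B'. oes A B' \<and> card B' = Suc (card B)"
proof -
  have fin: "finite B" using oes by (simp add: oes_def)
  obtain x where x: "x \<noteq> 0" "\<forall>v\<in>B. cinner v x = 0"
    using complement_nonzero[OF oes card] by blast
  define S where "S = {x. \<forall>v\<in>B. cinner v x = 0}"
  have SA: "A *v x \<in> S" if "x \<in> S" for x
  proof -
    have "cinner v (A *v x) = 0" if v: "v \<in> B" for v
    proof -
      obtain l :: real where l: "A *v v = complex_of_real l *s v" using oes v unfolding oes_def by blast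
      have "cinner v (A *v x) = cinner (A *v v) x" by (simp add: cinner_adjm herm)
      also have "\<dots> = 0" using l v \<open>x \<in> S\<close> by (simp add: S_def)
      finally show ?thesis .
    qed
    then show ?thesis by (simp add: S_def)
  qed
  have "\<exists>y\<in>S. y \<noteq> 0 \<and> (\<exists>\<mu>. A *v y = \<mu> *s y)"
    by (rule eigvec_in_subspace[of S A x]) (use x SA in \<open>auto simp: S_def\<close>)
  then obtain y \<mu> where y: "y \<in> S" "y \<noteq> 0" "A *v y = \<mu> *s y" by blast
  define sr where "sr = (\<Sum>i\<in>UNIV. (cmod (y $ i))\<^sup>2)"
  have yy: "cinner y y = complex_of_real sr" by (simp add: sr_def cinner_self)
  have sr0: "sr \<noteq> 0" using yy y(2) cinner_self_eq_0[of y] by auto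
  have "sr \<ge> 0" unfolding sr_def by (simp add: sum_nonneg)
  with sr0 have srp: "sr > 0" by simp
  have "\<mu> * cinner y y = cinner y (A *v y)" using y(3) by simp
  also have "\<dots> = cinner (A *v y) y" by (simp add: cinner_adjm herm)
  also have "\<dots> = cnj \<mu> * cinner y y" using y(3) by simp
  finally have "\<mu> = cnj \<mu>" using yy sr0 by simp
  then have "Im \<mu> = Im (cnj \<mu>)" by (rule arg_cong)
  then have "Im \<mu> = 0" by simp
  then have mu: "\<mu> = complex_of_real (Re \<mu>)" by (simp add: complex_eq_iff)
  define z where "z = complex_of_real (1 / sqrt sr) *s y"
  have sq: "(complex_of_real (sqrt sr))\<^sup>2 = complex_of_real sr"
    using srp by (simp flip: of_real_power)
  have zz: "cinner z z = 1"
    using srp sq by (simp add: z_def yy power2_eq_square[symmetric] field_simps)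
  have Az: "A *v z = complex_of_real (Re \<mu>) *s z"
    unfolding z_def by (subst mu[symmetric]) (simp add: vector_scalar_commute y(3) vec_eq_iff mult_ac)
  have zS: "cinner v z = 0" if "v \<in> B" for v
    using y(1) that by (simp add: z_def S_def)
  have znB: "z \<notin> B"
  proof
    assume "z \<in> B"
    then have "cinner z z = 0" by (rule zS)
    with zz show False by simp
  qed
  have o1: "cinner z w = 0" if "w \<in> B" for w
    using zS[OF that] cinner_commute[of z w] by simp
  have o2: "\<forall>v\<in>B. cinner v v = 1 \<and> (\<exists>l::real. A *v v = complex_of_real l *s v)"
    "\<forall>v\<in>B. \<forall>w\<in>B. v \<noteq> w \<longrightarrow> cinner v w = 0"
    using oes unfolding oes_def by blast+
  have "oes A (insert z B)"
    unfolding oes_def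
  proof (intro conjI)
    show "finite (insert z B)" using fin by simp
    show "\<forall>v\<in>insert z B. cinner v v = 1 \<and> (\<exists>l::real. A *v v = complex_of_real l *s v)"
      using o2(1) zz Az by blast
    show "\<forall>v\<in>insert z B. \<forall>w\<in>insert z B. v \<noteq> w \<longrightarrow> cinner v w = 0"
      using o2(2) o1 zS by blast
  qed
  moreover have "card (insert z B) = Suc (card B)" using fin znB by simp
  ultimately show ?thesis by blast
qed

lemma oes_card:
  fixes A :: "complex^'n^'n"
  assumes herm: "adjm A = A"
  shows "k \<le> CARD('n) \<Longrightarrow> \<exists>B. oes A B \<and> card B = k"
proof (induction k)
  case 0
  have "oes A {}" by (simp add: oes_def)
  then show ?case by (intro exI[of _ "{}"]) simp
next
  case (Suc k)
  then obtain B where "oes A B" "card B = k" by auto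
  then show ?case using oes_extend[OF herm, of B] Suc.prems by auto
qed

lemma positive_decomp:
  fixes A :: "complex^'n^'n"
  assumes pos: "positive A"
  shows "\<exists>U d. decomp A U d"
proof -
  have herm: "adjm A = A" using pos by (simp add: positive_def hermitian_def)
  obtain B where B: "oes A B" "card B = CARD('n)" using oes_card[OF herm] by blast
  have fin: "finite B" using B by (simp add: oes_def)
  obtain h where h: "bij_betw h (UNIV::'n set) B"
    using finite_same_card_bij[of "UNIV::'n set" B] fin B(2) by auto
  have hB: "h i \<in> B" for i using h by (auto simp: bij_betw_def)
  have hinj: "h i = h j \<longleftrightarrow> i = j" for i j using h by (auto simp: bij_betw_def inj_on_def)
  define d where "d i = (SOME l::real. A *v h i = complex_of_real l *s h i)" for i
  have hd: "A *v h i = complex_of_real (d i) *s h i" for i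
  proof -
    have "\<exists>l::real. A *v h i = complex_of_real l *s h i" using B(1) hB[of i] by (auto simp: oes_def)
    then show ?thesis unfolding d_def by (rule someI_ex)
  qed
  have hh: "cinner (h i) (h j) = (if i = j then 1 else 0)" for i j
    using B(1) hB[of i] hB[of j] hinj[of i j] by (auto simp: oes_def)
  define U :: "complex^'n^'n" where "U = (\<chi> r c. h c $ r)"
  have "adjm U ** U = mat 1"
    by (simp add: vec_eq_iff matrix_matrix_mult_def U_def mat_def hh[unfolded cinner_def])
  then have U: "unitary U" by (rule unitaryI)
  let ?D = "diagm (\<lambda>i. complex_of_real (d i))"
  have AU: "A ** U = U ** ?D"
  proof -
    have "(A ** U) $ r $ c = (U ** ?D) $ r $ c" for r c
    proof -
      have "(A ** U) $ r $ c = (A *v h c) $ r"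
        by (simp add: matrix_matrix_mult_def matrix_vector_mult_def U_def)
      also have "\<dots> = (U ** ?D) $ r $ c"
        by (simp add: hd mult_diagm_right U_def mult.commute)
      finally show ?thesis .
    qed
    then show ?thesis by (simp add: vec_eq_iff)
  qed
  have "A = A ** (U ** adjm U)" using unitaryD1[OF U] by simp
  also have "\<dots> = U ** ?D ** adjm U" by (simp add: matrix_mul_assoc AU)
  finally have Aeq: "A = U ** ?D ** adjm U" .
  have "d i \<ge> 0" for i
  proof -
    have "0 \<le> Re (cinner (h i) (A *v h i))"
      using pos unfolding positive_def cinner_def by blast
    also have "\<dots> = d i" using hh[of i i] by (simp add: hd)
    finally show ?thesis .
  qed
  then show ?thesis using U Aeq unfolding decomp_def by blast
qed




lemma matrix_add_rdistrib': "(A + B) ** C = A ** C + B ** (C::'a::semiring_1^'n^'m)"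
  by (simp add: vec_eq_iff matrix_matrix_mult_def sum.distrib distrib_right)

lemma matrix_sub_rdistrib': "(A - B) ** C = A ** C - B ** (C::'a::ring_1^'n^'m)"
  by (simp add: vec_eq_iff matrix_matrix_mult_def sum_subtractf left_diff_distrib)

lemma matrix_sub_ldistrib': "C ** (A - B) = C ** A - C ** (B::'a::ring_1^'n^'m)"
  by (simp add: vec_eq_iff matrix_matrix_mult_def sum_subtractf right_diff_distrib)

lemma bb_mult: "bounded_bilinear (\<lambda>A B::complex^'n^'n. A ** B)"
proof -
  have "bilinear (\<lambda>A B::complex^'n^'n. A ** B)"
    unfolding bilinear_def
    by (auto intro!: linearI simp: matrix_add_ldistrib matrix_add_rdistrib' scalar_matrix_assoc matrix_scalar_ac)
  then show ?thesis by (simp add: bilinear_conv_bounded_bilinear)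
qed

lemma trace_scaleR: "trace (r *\<^sub>R (A::complex^'n^'n)) = r *\<^sub>R trace A"
  by (simp add: trace_def scaleR_sum_right)

lemma bl_trace: "bounded_linear (\<lambda>A::complex^'n^'n. trace A)"
proof -
  have "linear (\<lambda>A::complex^'n^'n. trace A)"
    by (intro linearI) (simp_all add: trace_add trace_scaleR)
  then show ?thesis by (simp add: linear_conv_bounded_linear)
qed

definition mp :: "complex^'n^'n \<Rightarrow> nat \<Rightarrow> complex^'n^'n" where
  "mp X k = (((**) X) ^^ k) (mat 1)"

lemma mp_0[simp]: "mp X 0 = mat 1" by (simp add: mp_def)
lemma mp_Suc: "mp X (Suc k) = X ** mp X k" by (simp add: mp_def)

lemma mp_commute: "Y ** X = X ** Y \<Longrightarrow> Y ** mp X k = mp X k ** Y"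
  by (induction k) (simp_all add: mp_Suc matrix_mul_assoc, metis matrix_mul_assoc)

fun Dk :: "complex^'n^'n \<Rightarrow> complex^'n^'n \<Rightarrow> nat \<Rightarrow> complex^'n^'n" where
  "Dk B M 0 = 0"
| "Dk B M (Suc k) = B ** Dk B M k + M ** mp B k"

lemma trace_Dk:
  fixes B c K X :: "complex^'n^'n"
  assumes bc: "c ** B = B ** c" and X: "X ** B = B ** X" "X ** c = c ** X"
  shows "trace (X ** Dk B (c ** K - K ** c) k) = 0"
  using X
proof (induction k arbitrary: X)
  case 0
  then show ?case by (simp add: trace_def matrix_matrix_mult_def)
next
  case (Suc k)
  let ?F = "mp B k"
  have XB: "(X ** B) ** B = B ** (X ** B)" "(X ** B) ** c = c ** (X ** B)"
    using Suc.prems bc by (metis matrix_mul_assoc)+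
  have t1: "trace (X ** (B ** Dk B (c ** K - K ** c) k)) = 0"
    using Suc.IH[OF XB] by (simp add: matrix_mul_assoc)
  have Fc: "c ** ?F = ?F ** c" by (rule mp_commute[OF bc])
  have FX: "X ** ?F = ?F ** X" by (rule mp_commute[OF Suc.prems(1)])
  have e1: "trace (X ** ((c ** K) ** ?F)) = trace (K ** (?F ** X ** c))"
    by (metis matrix_mul_assoc trace_mul_sym)
  have e2: "trace (X ** ((K ** c) ** ?F)) = trace (K ** (c ** ?F ** X))"
    by (metis matrix_mul_assoc trace_mul_sym)
  have "?F ** X ** c = c ** ?F ** X"
    by (metis FX Fc Suc.prems(2) matrix_mul_assoc)
  then have t2: "trace (X ** ((c ** K - K ** c) ** ?F)) = 0"
    using e1 e2 by (simp add: matrix_add_ldistrib matrix_add_rdistrib' trace_sub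
        matrix_sub_ldistrib' matrix_sub_rdistrib')
  show ?case using t1 t2 by (simp add: matrix_add_ldistrib trace_add)
qed

lemma deriv_mp:
  fixes b :: "real \<Rightarrow> complex^'n^'n"
  assumes "(b has_vector_derivative M) (at t within I)"
  shows "((\<lambda>s. mp (b s) k) has_vector_derivative Dk (b t) M k) (at t within I)"
proof (induction k)
  case 0
  then show ?case by (simp add: mp_def)
next
  case (Suc k)
  have "((\<lambda>s. b s ** mp (b s) k) has_vector_derivative (b t ** Dk (b t) M k + M ** mp (b t) k)) (at t within I)"
    by (rule bounded_bilinear.has_vector_derivative[OF bb_mult assms Suc.IH])
  then show ?case by (simp add: mp_Suc)
qed

lemma trace_mp_const:
  fixes b :: "real \<Rightarrow> complex^'n^'n" and c :: "real \<Rightarrow> complex^'n^'n"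
  assumes I: "is_interval I"
    and comm: "\<forall>t\<in>I. c t ** b t = b t ** c t"
    and deriv: "\<forall>t\<in>I. (b has_vector_derivative (c t ** K - K ** c t)) (at t within I)"
    and t1: "t1 \<in> I" and t2: "t2 \<in> I"
  shows "trace (mp (b t1) k) = trace (mp (b t2) k)"
proof -
  have "\<exists>C. \<forall>t\<in>I. trace (mp (b t) k) = C"
  proof (rule has_derivative_zero_constant)
    show "convex I" using I by (rule is_interval_convex)
  next
    fix t assume t: "t \<in> I"
    have d: "((\<lambda>s. mp (b s) k) has_derivative (\<lambda>h. h *\<^sub>R Dk (b t) (c t ** K - K ** c t) k)) (at t within I)"
      using deriv_mp[OF deriv[rule_format, OF t]] by (simp add: has_vector_derivative_def)
    have tz: "trace (Dk (b t) (c t ** K - K ** c t) k) = 0"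
      using trace_Dk[of "c t" "b t" "mat 1" K k] comm t by simp
    have "((\<lambda>s. trace (mp (b s) k)) has_derivative (\<lambda>h. trace (h *\<^sub>R Dk (b t) (c t ** K - K ** c t) k))) (at t within I)"
      by (rule bounded_linear.has_derivative[OF bl_trace d])
    then show "((\<lambda>s. trace (mp (b s) k)) has_derivative (\<lambda>h. 0)) (at t within I)"
      by (simp add: trace_scaleR tz)
  qed
  then show ?thesis using t1 t2 by auto
qed




lemma trace_conj: "unitary U \<Longrightarrow> trace (U ** X ** adjm U) = trace X"
  by (metis matrix_mul_assoc matrix_mul_lid trace_mul_sym unitaryD2)

lemma mp_decomp:
  assumes "decomp b U d"
  shows "mp b k = U ** diagm (\<lambda>i. complex_of_real (d i ^ k)) ** adjm U"
proof (induction k)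
  case 0
  have "diagm (\<lambda>i. complex_of_real (d i ^ 0)) = mat 1"
    by (simp add: vec_eq_iff mat_def)
  moreover have "unitary U" using assms by (simp add: decomp_def)
  ultimately show ?case by (simp add: unitaryD1)
next
  case (Suc k)
  have U: "unitary U" and b: "b = U ** diagm (\<lambda>i. complex_of_real (d i)) ** adjm U"
    using assms by (auto simp: decomp_def)
  have "mp b (Suc k) = U ** diagm (\<lambda>i. complex_of_real (d i)) ** (adjm U ** U) ** diagm (\<lambda>i. complex_of_real (d i ^ k)) ** adjm U"
  proof -
    have "mp b (Suc k) = b ** mp b k" by (simp add: mp_Suc)
    also have "\<dots> = (U ** diagm (\<lambda>i. complex_of_real (d i)) ** adjm U) ** (U ** diagm (\<lambda>i. complex_of_real (d i ^ k)) ** adjm U)"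
      by (simp only: Suc.IH, subst (1) b, rule refl)
    finally show ?thesis by (simp add: matrix_mul_assoc)
  qed
  also have "\<dots> = U ** (diagm (\<lambda>i. complex_of_real (d i)) ** diagm (\<lambda>i. complex_of_real (d i ^ k))) ** adjm U"
    by (simp add: unitaryD2[OF U] matrix_mul_assoc)
  also have "\<dots> = U ** diagm (\<lambda>i. complex_of_real (d i ^ Suc k)) ** adjm U"
    by (simp add: diagm_mult)
  finally show ?case .
qed

lemma trace_diagm: "trace (diagm f) = sum f UNIV"
  by (simp add: trace_def)

lemma trace_mp_decomp:
  assumes "decomp b U d"
  shows "trace (mp b k) = complex_of_real (\<Sum>i\<in>UNIV. d i ^ k)"
proof -
  have U: "unitary U" using assms by (simp add: decomp_def)
  show ?thesis
    by (simp only: mp_decomp[OF assms] trace_conj[OF U] trace_diagm of_real_sum)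
qed

lemma poly_sums_eq:
  fixes d e :: "'n::finite \<Rightarrow> real"
  assumes "\<forall>k. (\<Sum>i\<in>UNIV. d i ^ k) = (\<Sum>i\<in>UNIV. e i ^ k)"
  shows "(\<Sum>i\<in>UNIV. poly f (d i)) = (\<Sum>i\<in>UNIV. poly f (e i))"
proof -
  have "(\<Sum>i\<in>UNIV. poly f (d i)) = (\<Sum>j\<le>degree f. coeff f j * (\<Sum>i\<in>UNIV. d i ^ j))"
    by (simp add: poly_altdef sum_distrib_left) (rule sum.swap)
  also have "\<dots> = (\<Sum>j\<le>degree f. coeff f j * (\<Sum>i\<in>UNIV. e i ^ j))"
    using assms by simp
  also have "\<dots> = (\<Sum>i\<in>UNIV. poly f (e i))"
    by (simp add: poly_altdef sum_distrib_left) (rule sum.swap)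
  finally show ?thesis .
qed

lemma count_eq:
  fixes d e :: "'n::finite \<Rightarrow> real"
  assumes ps: "\<forall>k. (\<Sum>i\<in>UNIV. d i ^ k) = (\<Sum>i\<in>UNIV. e i ^ k)"
  shows "card {i. d i = l} = card {i. e i = l}"
proof -
  define F where "F = range d \<union> range e"
  have fF: "finite F" by (simp add: F_def)
  define g where "g = (\<Prod>\<mu>\<in>F - {l}. [:-\<mu>, 1:])"
  have pg: "poly g x = (\<Prod>\<mu>\<in>F - {l}. x - \<mu>)" for x
    by (simp add: g_def poly_prod)
  have gl: "poly g l \<noteq> 0" using fF by (simp add: pg)
  have gx: "poly g x = (if x = l then poly g l else 0)" if "x \<in> F" for x
  proof (cases "x = l")
    case False
    then have "x \<in> F - {l}" using that by simp
    then show ?thesis using fF False by (simp add: pg prod_zero_iff)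
  qed simp
  have cnt: "(\<Sum>i\<in>UNIV. poly g (h i)) = real (card {i. h i = l}) * poly g l"
    if "range h \<subseteq> F" for h :: "'n \<Rightarrow> real"
  proof -
    have "(\<Sum>i\<in>UNIV. poly g (h i)) = (\<Sum>i\<in>UNIV. if h i = l then poly g l else 0)"
    proof (rule sum.cong)
      fix i :: 'n
      have "h i \<in> F" using that by auto
      then show "poly g (h i) = (if h i = l then poly g l else 0)" by (rule gx)
    qed simp
    also have "\<dots> = (\<Sum>i\<in>{i. h i = l}. poly g l)"
      by (simp add: sum.If_cases)
    also have "\<dots> = real (card {i. h i = l}) * poly g l" by simp
    finally show ?thesis .
  qed
  have "real (card {i. d i = l}) * poly g l = (\<Sum>i\<in>UNIV. poly g (d i))"
    using cnt[of d] by (simp add: F_def)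
  also have "\<dots> = (\<Sum>i\<in>UNIV. poly g (e i))" by (rule poly_sums_eq[OF ps])
  also have "\<dots> = real (card {i. e i = l}) * poly g l"
    using cnt[of e] by (simp add: F_def)
  finally have "real (card {i. d i = l}) * poly g l = real (card {i. e i = l}) * poly g l" .
  then show ?thesis using gl by simp
qed

lemma perm_exists:
  fixes d e :: "'n::finite \<Rightarrow> real"
  assumes "\<And>l. card {i. d i = l} = card {i. e i = l}"
  shows "\<exists>\<sigma>. inj \<sigma> \<and> (\<forall>i. e i = d (\<sigma> i))"
proof -
  have "\<forall>l. \<exists>f. bij_betw f {i. e i = l} {i. d i = l}"
  proof
    fix l show "\<exists>f. bij_betw f {i. e i = l} {i. d i = l}"
      by (rule finite_same_card_bij) (simp_all add: assms)
  qed
  from choice[OF this] obtain F where F: "\<And>l. bij_betw (F l) {i. e i = l} {i. d i = l}" by blast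
  define \<sigma> where "\<sigma> i = F (e i) i" for i
  have de: "d (\<sigma> i) = e i" for i
    using F[of "e i"] unfolding \<sigma>_def bij_betw_def by auto
  have "inj \<sigma>"
  proof (rule injI)
    fix i j assume eq: "\<sigma> i = \<sigma> j"
    then have eij: "e i = e j" using de[of i] de[of j] by simp
    have "F (e i) i = F (e i) j" using eq eij by (simp add: \<sigma>_def)
    moreover have "inj_on (F (e i)) {k. e k = e i}" using F[of "e i"] by (simp add: bij_betw_def)
    ultimately show "i = j" using eij by (auto simp: inj_on_def)
  qed
  then show ?thesis using de by (intro exI[of _ \<sigma>]) simp
qed

lemma similar_from_perm:
  fixes b1 b2 U V :: "complex^'n^'n" and \<sigma> :: "'n \<Rightarrow> 'n"
  assumes b1: "decomp b1 U d" and b2: "decomp b2 V e" and \<sigma>: "inj \<sigma>" "\<forall>i. e i = d (\<sigma> i)"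
  shows "\<exists>W. unitary W \<and> b2 = W ** b1 ** adjm W"
proof -
  define P :: "complex^'n^'n" where "P = (\<chi> r c. if r = \<sigma> c then 1 else 0)"
  have Pn: "P $ r $ c = (if r = \<sigma> c then 1 else 0)" for r c by (simp add: P_def)
  have PP: "adjm P ** P = mat 1"
  proof -
    have "(adjm P ** P) $ i $ j = (if i = j then 1 else 0)" for i j
    proof -
      have "(adjm P ** P) $ i $ j = (\<Sum>k\<in>UNIV. cnj (P $ k $ i) * P $ k $ j)"
        by (simp add: matrix_matrix_mult_def)
      also have "\<dots> = (\<Sum>k\<in>UNIV. if k = \<sigma> i then (if \<sigma> i = \<sigma> j then 1 else 0) else 0)"
        by (rule sum.cong) (simp_all add: Pn)
      also have "\<dots> = (if \<sigma> i = \<sigma> j then 1 else 0)"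
        by simp
      also have "\<dots> = (if i = j then 1 else 0)" using \<sigma>(1) by (auto simp: inj_def)
      finally show ?thesis .
    qed
    then show ?thesis by (simp add: vec_eq_iff mat_def)
  qed
  then have P: "unitary P" by (rule unitaryI)
  let ?D = "diagm (\<lambda>i. complex_of_real (d i))"
  let ?E = "diagm (\<lambda>i. complex_of_real (e i))"
  have DE: "?E = adjm P ** ?D ** P"
  proof -
    have "(adjm P ** ?D ** P) $ i $ j = ?E $ i $ j" for i j
    proof -
      have "(adjm P ** ?D ** P) $ i $ j = (\<Sum>k\<in>UNIV. cnj (P $ k $ i) * complex_of_real (d k) * P $ k $ j)"
        by (simp add: matrix_matrix_mult_def[of "adjm P ** ?D" P] mult_diagm_right)
      also have "\<dots> = (\<Sum>k\<in>UNIV. if k = \<sigma> i then (if \<sigma> i = \<sigma> j then complex_of_real (d (\<sigma> i)) else 0) else 0)"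
        by (rule sum.cong) (simp_all add: Pn)
      also have "\<dots> = (if \<sigma> i = \<sigma> j then complex_of_real (d (\<sigma> i)) else 0)"
        by simp
      also have "\<dots> = ?E $ i $ j" using \<sigma> by (auto simp: inj_def)
      finally show ?thesis .
    qed
    then show ?thesis by (simp add: vec_eq_iff)
  qed
  have U: "unitary U" and V: "unitary V"
    and b1e: "b1 = U ** ?D ** adjm U" and b2e: "b2 = V ** ?E ** adjm V"
    using b1 b2 by (auto simp: decomp_def)
  define W where "W = V ** adjm P ** adjm U"
  have W: "unitary W" unfolding W_def
    by (intro unitary_mult unitary_adjm U V P)
  have aW: "adjm W = U ** P ** adjm V"
    by (simp add: W_def adjm_mult matrix_mul_assoc)
  have "W ** b1 ** adjm W = V ** adjm P ** (adjm U ** U) ** ?D ** (adjm U ** U) ** P ** adjm V"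
    unfolding aW unfolding b1e W_def by (simp only: matrix_mul_assoc)
  also have "\<dots> = V ** (adjm P ** ?D ** P) ** adjm V"
    by (simp only: unitaryD2[OF U] matrix_mul_rid matrix_mul_assoc)
  also have "\<dots> = b2" by (simp only: DE[symmetric] b2e)
  finally show ?thesis using W by metis
qed




lemma adjm_vec_cancel: "unitary W \<Longrightarrow> adjm W *v (W *v v) = v"
  by (simp add: matrix_vector_mul_assoc unitaryD2)

lemma eigen_conj1:
  assumes W: "unitary W" and "is_eigenvalue A z"
  shows "is_eigenvalue (W ** A ** adjm W) z"
proof -
  obtain v where v: "v \<noteq> 0" "A *v v = (\<chi> i. z * v $ i)" using assms(2) by (auto simp: is_eigenvalue_def)
  have Av: "A *v v = z *s v" using v(2) by (simp add: vec_eq_iff)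
  define w where "w = W *v v"
  have "w \<noteq> 0" using v(1) adjm_vec_cancel[OF W, of v] by (auto simp: w_def)
  moreover have "(W ** A ** adjm W) *v w = (\<chi> i. z * w $ i)"
  proof -
    have "(W ** A ** adjm W) *v w = W *v (A *v (adjm W *v (W *v v)))"
      unfolding w_def by (simp only: matrix_vector_mul_assoc[symmetric])
    also have "\<dots> = z *s w" by (simp add: adjm_vec_cancel[OF W] Av vector_scalar_commute w_def)
    finally show ?thesis by (simp add: vec_eq_iff)
  qed
  ultimately show ?thesis by (auto simp: is_eigenvalue_def)
qed

lemma conj_back:
  assumes W: "unitary W" shows "adjm W ** (W ** A ** adjm W) ** W = A"
proof -
  have "adjm W ** (W ** A ** adjm W) ** W = (adjm W ** W) ** A ** (adjm W ** W)"
    by (simp only: matrix_mul_assoc)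
  then show ?thesis by (simp add: unitaryD2[OF W])
qed

lemma eigen_conj:
  assumes W: "unitary W"
  shows "is_eigenvalue (W ** A ** adjm W) z \<longleftrightarrow> is_eigenvalue A z"
  using eigen_conj1[OF W, of A z] eigen_conj1[OF unitary_adjm[OF W], of "W ** A ** adjm W" z]
  by (auto simp: conj_back[OF W])


definition cmap :: "complex^'n^'n \<Rightarrow> complex poly^'n^'n" where
  "cmap M = (\<chi> i j. [:M $ i $ j:])"

lemma cmap_mult: "cmap (A ** B) = cmap A ** cmap B"
proof -
  have cs: "(\<Sum>k\<in>S. [:f k:]) = [:\<Sum>k\<in>S. f k:]" for S and f :: "'n \<Rightarrow> complex"
    by (induction S rule: infinite_finite_induct) simp_all
  have "[:\<Sum>k\<in>UNIV. A $ i $ k * B $ k $ j:] = (\<Sum>k\<in>UNIV. [:A $ i $ k:] * [:B $ k $ j:])" for i j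
    by (simp add: cs mult_ac)
  then show ?thesis by (simp add: cmap_def vec_eq_iff matrix_matrix_mult_def)
qed

lemma cmap_one: "cmap (mat 1) = mat 1"
  by (simp add: cmap_def vec_eq_iff mat_def)

lemma charpoly_alt: "charpoly A = det (mat [:0, 1:] - cmap A)"
  unfolding charpoly_def cmap_def mat_def by (rule arg_cong[of _ _ det]) (simp add: vec_eq_iff)

lemma mat_scal_comm: "(M::'a::comm_ring_1^'n^'n) ** mat x = mat x ** M"
  by (simp add: vec_eq_iff matrix_matrix_mult_def mat_def if_distrib if_distribR mult.commute cong: if_cong)

lemma charpoly_conj:
  assumes W: "unitary W"
  shows "charpoly (W ** A ** adjm W) = charpoly A"
proof -
  let ?X = "mat [:0, 1:] :: complex poly^'n^'n"
  have WW: "cmap W ** cmap (adjm W) = mat 1"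
    by (simp only: cmap_mult[symmetric] unitaryD1[OF W] cmap_one)
  have c1: "cmap W ** ?X = ?X ** cmap W" by (rule mat_scal_comm)
  have "cmap W ** ?X ** cmap (adjm W) = ?X ** cmap W ** cmap (adjm W)" by (simp only: c1)
  also have "\<dots> = ?X" by (simp only: matrix_mul_assoc[symmetric] WW matrix_mul_rid)
  finally have X: "cmap W ** ?X ** cmap (adjm W) = ?X" .
  have "cmap W ** (?X - cmap A) ** cmap (adjm W) = cmap W ** ?X ** cmap (adjm W) - cmap (W ** A ** adjm W)"
    by (simp only: matrix_sub_ldistrib' matrix_sub_rdistrib' cmap_mult)
  then have Y: "?X - cmap (W ** A ** adjm W) = cmap W ** (?X - cmap A) ** cmap (adjm W)"
    by (simp only: X)
  have "charpoly (W ** A ** adjm W) = det (cmap W) * det (?X - cmap A) * det (cmap (adjm W))"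
    by (simp only: charpoly_alt Y det_mul)
  also have "\<dots> = det (?X - cmap A) * (det (cmap W) * det (cmap (adjm W)))"
    by (simp only: mult_ac)
  also have "\<dots> = charpoly A" by (simp only: det_mul[symmetric] WW det_I mult_1_right charpoly_alt)
  finally show ?thesis .
qed

lemma norm_cinner: "norm v = sqrt (Re (cinner v v))"
  by (simp add: norm_vec_def L2_set_def cinner_self)

lemma norm_unitary: "unitary W \<Longrightarrow> norm (W *v v) = norm v"
  unfolding norm_cinner by (simp add: cinner_adjm adjm_vec_cancel)

lemma opnorm_conj:
  assumes W: "unitary W"
  shows "opnorm (W ** A ** adjm W) = opnorm A"
proof -
  let ?g = "\<lambda>y. norm (A *v y) / norm y"
  have "(\<lambda>x. norm ((W ** A ** adjm W) *v x) / norm x) = ?g \<circ> (\<lambda>x. adjm W *v x)"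
  proof
    fix x
    have "norm ((W ** A ** adjm W) *v x) = norm (A *v (adjm W *v x))"
      by (simp add: norm_unitary[OF W] flip: matrix_vector_mul_assoc)
    moreover have "norm x = norm (adjm W *v x)"
      using norm_unitary[OF unitary_adjm[OF W], of x] by simp
    ultimately show "norm ((W ** A ** adjm W) *v x) / norm x = (?g \<circ> (\<lambda>x. adjm W *v x)) x" by simp
  qed
  moreover have "range (\<lambda>x. adjm W *v x) = UNIV"
  proof -
    have "adjm W *v (W *v y) = y" for y by (rule adjm_vec_cancel[OF W])
    then show ?thesis by (metis surjI surj_def)
  qed
  ultimately show ?thesis
    unfolding opnorm_def onorm_def by (simp only: image_comp[symmetric])
qed

lemma decomp_adj:
  assumes "decomp A U d"
  shows "adjm A = A"
  using assms by (auto simp: decomp_def adjm_mult matrix_mul_assoc)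

lemma decomp_sq:
  assumes "decomp A U d"
  shows "decomp (adjm A ** A) U (\<lambda>i. d i * d i)"
proof -
  let ?D = "diagm (\<lambda>i. complex_of_real (d i))"
  have U: "unitary U" and Ae: "A = U ** ?D ** adjm U" and d: "\<forall>i. d i \<ge> 0"
    using assms by (auto simp: decomp_def)
  have "adjm A ** A = A ** A" by (simp only: decomp_adj[OF assms])
  also have "\<dots> = (U ** ?D ** adjm U) ** (U ** ?D ** adjm U)" by (simp only: Ae[symmetric])
  also have "\<dots> = U ** ?D ** (adjm U ** U) ** ?D ** adjm U" by (simp only: matrix_mul_assoc)
  also have "\<dots> = U ** (?D ** ?D) ** adjm U" by (simp add: unitaryD2[OF U] matrix_mul_assoc)
  also have "\<dots> = U ** diagm (\<lambda>i. complex_of_real (d i * d i)) ** adjm U"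
    by (simp add: diagm_mult)
  finally show ?thesis using U d by (simp add: decomp_def)
qed

lemma snorm_conj:
  assumes A: "decomp A U d" and W: "unitary W"
  shows "snorm s (W ** A ** adjm W) = snorm s A"
proof -
  have "adjm (W ** A ** adjm W) = W ** adjm A ** adjm W"
    by (simp add: adjm_mult matrix_mul_assoc)
  then have "adjm (W ** A ** adjm W) ** (W ** A ** adjm W) = W ** adjm A ** (adjm W ** W) ** A ** adjm W"
    by (simp only: matrix_mul_assoc)
  also have "\<dots> = W ** (adjm A ** A) ** adjm W"
    by (simp add: unitaryD2[OF W] matrix_mul_assoc)
  finally have m: "mabs (W ** A ** adjm W) = W ** mabs A ** adjm W"
    by (simp only: mabs_def mpow_conj[OF decomp_sq[OF A] W])
  have dm: "decomp (mabs A) U (\<lambda>i. (d i * d i) powr (1/2))"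
    unfolding mabs_def by (rule decomp_mpow[OF decomp_sq[OF A]])
  show ?thesis
    unfolding snorm_def m mpow_conj[OF dm W] tau_def trace_conj[OF W] ..
qed




theorem mainTheorem3:
  fixes n :: nat and K :: "complex^'n^'n" and b :: "real \<Rightarrow> complex^'n^'n"
    and I :: "real set" and s :: real
  defines "p \<equiv> 2 * real n"
  defines "q \<equiv> p / (p - 1)"
  defines "\<alpha> \<equiv> q / 2"
  assumes n: "n \<ge> 1"
    and skew: "adjm K = - K"
    and I: "is_interval I"
    and pos: "\<forall>t\<in>I. positive (b t)"
    and deriv: "\<forall>t\<in>I. (b has_vector_derivative
                   (mpow (b t) \<alpha> ** K - K ** mpow (b t) \<alpha>)) (at t within I)"
    and C1: "continuous_on I (\<lambda>t. mpow (b t) \<alpha> ** K - K ** mpow (b t) \<alpha>)"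
    and s: "s \<ge> 1"
  shows "\<forall>t1\<in>I. \<forall>t2\<in>I.
           snorm s (b t1) = snorm s (b t2) \<and>
           {z. is_eigenvalue (b t1) z} = {z. is_eigenvalue (b t2) z} \<and>
           (\<forall>z. eig_mult (b t1) z = eig_mult (b t2) z) \<and>
           opnorm (b t1) = opnorm (b t2)"
proof (intro ballI)
  fix t1 t2 assume t1: "t1 \<in> I" and t2: "t2 \<in> I"
  have comm: "\<forall>t\<in>I. mpow (b t) \<alpha> ** b t = b t ** mpow (b t) \<alpha>"
  proof
    fix t assume "t \<in> I"
    then obtain U d where "decomp (b t) U d" using pos positive_decomp by blast
    then show "mpow (b t) \<alpha> ** b t = b t ** mpow (b t) \<alpha>" by (rule mpow_commute)
  qed
  have tr: "trace (mp (b t1) k) = trace (mp (b t2) k)" for k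
    by (rule trace_mp_const[where c = "\<lambda>t. mpow (b t) \<alpha>", OF I comm deriv t1 t2])
  obtain U1 d1 where D1: "decomp (b t1) U1 d1" using pos t1 positive_decomp by blast
  obtain U2 d2 where D2: "decomp (b t2) U2 d2" using pos t2 positive_decomp by blast
  have ps: "\<forall>k. (\<Sum>i\<in>UNIV. d1 i ^ k) = (\<Sum>i\<in>UNIV. d2 i ^ k)"
    using tr trace_mp_decomp[OF D1] trace_mp_decomp[OF D2] by (metis of_real_eq_iff)
  obtain \<sigma> where \<sigma>: "inj \<sigma>" "\<forall>i. d2 i = d1 (\<sigma> i)"
    using perm_exists[OF count_eq[OF ps]] by blast
  obtain W where W: "unitary W" and b2: "b t2 = W ** b t1 ** adjm W"
    using similar_from_perm[OF D1 D2 \<sigma>] by blast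
  show "snorm s (b t1) = snorm s (b t2) \<and>
           {z. is_eigenvalue (b t1) z} = {z. is_eigenvalue (b t2) z} \<and>
           (\<forall>z. eig_mult (b t1) z = eig_mult (b t2) z) \<and>
           opnorm (b t1) = opnorm (b t2)"
    unfolding b2 eig_mult_def
    by (simp add: snorm_conj[OF D1 W] eigen_conj[OF W] charpoly_conj[OF W] opnorm_conj[OF W])
qed


end
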